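(* Let $q\in(0,1)$ and $b>0$, and let $(s_n)_{n\ge0}$ be a sequence of positive numbers together with an infinite set $B=\{n_1<n_2<\dots\}$ of nonnegative integers (the bad subscripts) such that $s_{n+1}=qs_n$ for $n\notin B$ and $s_{n+1}\le 2qs_n+b$ for $n\in B$. Suppose $n_{i+1}-n_i\to\infty$ as $i\to\infty$. Then $s_{n_i}\to0$ as $i\to\infty$. *)

theory Defs
  imports "HOL-Analysis.Analysis"
begin

end

theory Submission
  imports Defs
begin

lemma gap_notin:
  fixes B :: "nat set"
  assumes "infinite B" "enumerate B i < n" "n < enumerate B (Suc i)"
  shows "n \<notin> B"
proof
  assume "n \<in> B"
  then obtain m where m: "enumerate B m = n" using enumerate_Ex[OF assms(1)] by blast
  have "enumerate B i < enumerate B m" using assms(2) m by simp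
  then have "i < m" using assms(1) by simp
  moreover have "enumerate B m < enumerate B (Suc i)" using assms(3) m by simp
  then have "m < Suc i" using assms(1) by simp
  ultimately show False by simp
qed

theorem lemma6p1:
  fixes q b :: real and s :: "nat \<Rightarrow> real" and B :: "nat set"
  assumes "0 < q" and "q < 1" and "0 < b"
    and "\<And>n. s n > 0"
    and "infinite B"
    and "\<And>n. n \<notin> B \<Longrightarrow> s (Suc n) = q * s n"
    and "\<And>n. n \<in> B \<Longrightarrow> s (Suc n) \<le> 2 * q * s n + b"
    and "filterlim (\<lambda>i. enumerate B (Suc i) - enumerate B i) at_top sequentially"
  shows "(\<lambda>i. s (enumerate B i)) \<longlonglongrightarrow> 0"
proof -
  define e where "e = enumerate B"
  define a where "a i = s (e i)" for i
  define g where "g i = e (Suc i) - e i" for i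
  have step: "e i < e (Suc i)" for i unfolding e_def using enumerate_step[OF assms(5)] .
  have inB: "e i \<in> B" for i unfolding e_def using enumerate_in_set[OF assms(5)] .
  have pw: "s (e i + 1 + k) = q ^ k * s (e i + 1)" if "e i + 1 + k \<le> e (Suc i)" for i k
    using that
  proof (induction k)
    case 0 then show ?case by simp
  next
    case (Suc k)
    have "e i + 1 + k \<notin> B" using gap_notin[OF assms(5), of i "e i + 1 + k"] Suc.prems
      unfolding e_def by simp
    then have "s (Suc (e i + 1 + k)) = q * s (e i + 1 + k)" using assms(6) by blast
    with Suc show ?case by simp
  qed
  have rec: "a (Suc i) \<le> q ^ (g i - 1) * (2 * q * a i + b)" for i
  proof -
    have eq: "e (Suc i) = e i + 1 + (g i - 1)" using step[of i] unfolding g_def by simp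
    have "a (Suc i) = q ^ (g i - 1) * s (e i + 1)"
      unfolding a_def using pw[of i "g i - 1"] eq by simp
    also have "\<dots> \<le> q ^ (g i - 1) * (2 * q * a i + b)"
      using assms(7)[OF inB[of i]] assms(1) unfolding a_def by (intro mult_left_mono) auto
    finally show ?thesis .
  qed
  have apos: "a i > 0" for i unfolding a_def using assms(4) by simp
  have glim: "filterlim g at_top sequentially" using assms(8) unfolding g_def e_def by simp
  have qlim: "(\<lambda>i. q ^ (g i - 1)) \<longlonglongrightarrow> 0"
  proof -
    have "filterlim (\<lambda>i. g i - 1) at_top sequentially"
      using glim by (rule filterlim_compose[OF filterlim_minus_const_nat_at_top])
    moreover have "(\<lambda>n. q ^ n) \<longlonglongrightarrow> 0" using assms(1,2) by (intro LIMSEQ_power_zero) auto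
    ultimately show ?thesis by (rule filterlim_compose[rotated])
  qed
  show ?thesis
  proof (rule LIMSEQ_I)
    fix r :: real assume r: "0 < r"
    define d where "d = min (1 / (4 * q)) (r / (4 * b))"
    have d: "d > 0" using r assms(1,3) unfolding d_def by simp
    obtain N where N: "\<And>i. i \<ge> N \<Longrightarrow> norm (q ^ (g i - 1)) < d"
      using LIMSEQ_D[OF qlim d] by auto
    have rec2: "a (Suc i) \<le> a i / 2 + r / 4" if "i \<ge> N" for i
    proof -
      have qd: "q ^ (g i - 1) < d" using N[OF that] by simp
      have qp: "0 \<le> q ^ (g i - 1)" using assms(1) by simp
      have "a (Suc i) \<le> q ^ (g i - 1) * (2 * q * a i + b)" by (rule rec)
      also have "\<dots> \<le> d * (2 * q * a i + b)"
        using qd apos[of i] assms(1,3) by (intro mult_right_mono) auto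
      also have "\<dots> = (d * q) * 2 * a i + d * b" by (simp add: algebra_simps)
      also have "\<dots> \<le> (1/4) * 2 * a i + r / 4"
      proof (intro add_mono mult_right_mono)
        have "d * q \<le> 1 / (4 * q) * q" unfolding d_def using assms(1)
          by (intro mult_right_mono) auto
        also have "\<dots> = 1/4" using assms(1) by simp
        finally show "d * q \<le> 1/4" .
        have "d * b \<le> r / (4 * b) * b" unfolding d_def using assms(3)
          by (intro mult_right_mono) auto
        also have "\<dots> = r/4" using assms(3) by simp
        finally show "d * b \<le> r / 4" .
      qed (use apos[of i] in auto)
      finally show ?thesis by simp
    qed
    have bound: "a (N + k) \<le> a N / 2 ^ k + r / 2" for k
    proof (induction k)
      case 0 then show ?case using r by simp
    next
      case (Suc k)
      have "a (N + Suc k) \<le> a (N + k) / 2 + r / 4" using rec2[of "N + k"] by simp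
      also have "\<dots> \<le> (a N / 2 ^ k + r / 2) / 2 + r / 4" using Suc by simp
      also have "\<dots> = a N / 2 ^ Suc k + r / 2" by (simp add: field_simps)
      finally show ?case .
    qed
    obtain K where K: "a N / 2 ^ K < r / 2"
    proof -
      have lim0: "(\<lambda>k. a N / 2 ^ k) \<longlonglongrightarrow> 0"
        by (intro LIMSEQ_divide_realpow_zero) auto
      have "\<exists>K. \<forall>k\<ge>K. norm (a N / 2 ^ k - 0) < r / 2"
        by (rule LIMSEQ_D[OF lim0]) (use r in simp)
      then obtain K where K: "\<forall>k\<ge>K. norm (a N / 2 ^ k - 0) < r / 2" by blast
      have "norm (a N / 2 ^ K - 0) < r / 2" using K by blast
      then have "a N / 2 ^ K < r / 2" using apos[of N] by simp
      then show ?thesis by (rule that)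
    qed
    show "\<exists>M. \<forall>n\<ge>M. norm (s (enumerate B n) - 0) < r"
    proof (rule exI[of _ "N + K"], intro allI impI)
      fix n assume n: "n \<ge> N + K"
      define k where "k = n - N"
      have k: "n = N + k" "k \<ge> K" using n unfolding k_def by auto
      have "a N / 2 ^ k \<le> a N / 2 ^ K"
      proof (rule divide_left_mono)
        show "(2::real) ^ K \<le> 2 ^ k" using k(2) by (rule power_increasing) simp
      qed (use apos[of N] in auto)
      then have "a (N + k) < r" using bound[of k] K by linarith
      then have "a n < r" using k(1) by simp
      then show "norm (s (enumerate B n) - 0) < r" using apos[of n] unfolding a_def e_def by simp
    qed
  qed
qed

end
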